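(* Let $\sigma=\tanh$. Then, for the covariances and metric defined in the context: 1. If $\sigma_w^2=1$, then $\lim_{L\to\infty}\mathrm{FSP}_L(\sigma_w^2)=0$. 2. If $0<\sigma_w^2<1$, then $\mathrm{FSP}_L(\sigma_w^2)\le\frac{C}{d_0}\sigma_w^{2L}$ for every $L\ge1$.
   Context: Let $\mathcal G$ be a finite undirected graph with $n$ nodes, adjacency matrix $A$, degree matrix $D=\mathrm{diag}(A\mathbf 1_n)$, $\tilde A=A+I$, $\tilde D=D+I$, $\hat A=\tilde D^{-1/2}\tilde A\tilde D^{-1/2}$. Let $X\in\mathbb R^{n\times d_0}$ be nonzero, $C\ge1$ an integer, $\sigma_w^2>0$. For positive semidefinite $\Sigma\in\mathbb R^{n\times n}$, $G(\Sigma)=\mathbb E_{h\sim N(\mathbf 0_n,\Sigma)}[\sigma(h)\sigma(h)^\top]$ ($\sigma$ entrywise). Define $\Sigma^{(1)}=\frac{\sigma_w^2}{d_0}\hat AXX^\top\hat A$ and $\Sigma^{(l+1)}=\sigma_w^2\hat AG(\Sigma^{(l)})\hat A$. With $H\in\mathbb R^{n\times C}$ having i.i.d. columns $N(\mathbf 0_n,\Sigma^{(L)})$, $\mathrm{FSP}_L(\sigma_w^2)=\mathbb E[\|H\|_F^2/\|X\|_F^2]$. *)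

theory Defs
  imports "HOL-Probability.Probability"
begin

text \<open>Matrices are rendered as \<open>real^'m^'n\<close> (n rows, m columns); the number of
  nodes is \<open>n = CARD('n)\<close> and the feature dimension is \<open>d0 = CARD('d)\<close>.\<close>

definition adjacency_matrix :: "real^'n^'n \<Rightarrow> bool" where
  "adjacency_matrix A \<longleftrightarrow>
     (\<forall>i j. A$i$j = 0 \<or> A$i$j = 1) \<and> (\<forall>i j. A$i$j = A$j$i) \<and> (\<forall>i. A$i$i = 0)"

definition diag_mat :: "real^'n \<Rightarrow> real^'n^'n" where
  "diag_mat v = (\<chi> i j. if i = j then v$i else 0)"

definition degree_mat :: "real^'n^'n \<Rightarrow> real^'n^'n" where
  "degree_mat A = diag_mat (A *v (\<chi> i. 1))"

definition A_tilde :: "real^'n^'n \<Rightarrow> real^'n^'n" where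
  "A_tilde A = A + mat 1"

definition D_tilde :: "real^'n^'n \<Rightarrow> real^'n^'n" where
  "D_tilde A = degree_mat A + mat 1"

text \<open>\<open>D_tilde^{-1/2}\<close> (D_tilde is diagonal with positive diagonal).\<close>
definition D_tilde_inv_sqrt :: "real^'n^'n \<Rightarrow> real^'n^'n" where
  "D_tilde_inv_sqrt A = diag_mat (\<chi> i. 1 / sqrt (D_tilde A $ i $ i))"

definition A_hat :: "real^'n^'n \<Rightarrow> real^'n^'n" where
  "A_hat A = D_tilde_inv_sqrt A ** A_tilde A ** D_tilde_inv_sqrt A"

abbreviation std_gauss :: "(real^'n) measure" where
  "std_gauss \<equiv> density lborel (\<lambda>x. ennreal (\<Prod>i\<in>UNIV. std_normal_density (x$i)))"

text \<open>Centered Gaussian \<open>N(0,\<Sigma>)\<close> for a positive semidefinite \<open>\<Sigma>\<close> (possibly singular):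
  the law of \<open>B z\<close>, \<open>z\<close> standard Gaussian, where \<open>B B^T = \<Sigma>\<close>.\<close>
definition gauss :: "real^'n^'n \<Rightarrow> (real^'n) measure" where
  "gauss S = distr (std_gauss :: (real^'n) measure) borel (\<lambda>z. (SOME B::real^'n^'n. B ** transpose B = S) *v z)"

definition psd :: "real^'n^'n \<Rightarrow> bool" where
  "psd S \<longleftrightarrow> transpose S = S \<and> (\<forall>x. 0 \<le> x \<bullet> (S *v x))"

definition Gmap :: "(real \<Rightarrow> real) \<Rightarrow> real^'n^'n \<Rightarrow> real^'n^'n" where
  "Gmap \<sigma> S = (\<chi> i j. \<integral>h. \<sigma> (h$i) * \<sigma> (h$j) \<partial>gauss S)"

definition transpose_rect :: "real^'m^'n \<Rightarrow> real^'n^'m" where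
  "transpose_rect X = (\<chi> j i. X$i$j)"

text \<open>\<open>Sigma_seq \<sigma> s A X k = \<Sigma>^(k+1)\<close>, where \<open>s = \<sigma>_w^2\<close>.\<close>
primrec Sigma_seq :: "(real \<Rightarrow> real) \<Rightarrow> real \<Rightarrow> real^'n^'n \<Rightarrow> real^'d^'n \<Rightarrow> nat \<Rightarrow> real^'n^'n" where
  "Sigma_seq \<sigma> s A X 0 = (s / real CARD('d)) *\<^sub>R (A_hat A ** (X ** transpose_rect X) ** A_hat A)"
| "Sigma_seq \<sigma> s A X (Suc k) = s *\<^sub>R (A_hat A ** Gmap \<sigma> (Sigma_seq \<sigma> s A X k) ** A_hat A)"

definition Sigma_layer :: "(real \<Rightarrow> real) \<Rightarrow> real \<Rightarrow> real^'n^'n \<Rightarrow> real^'d^'n \<Rightarrow> nat \<Rightarrow> real^'n^'n" where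
  "Sigma_layer \<sigma> s A X L = Sigma_seq \<sigma> s A X (L - 1)"

definition frob_sq :: "real^'m^'n \<Rightarrow> real" where
  "frob_sq M = (\<Sum>i\<in>UNIV. \<Sum>j\<in>UNIV. (M$i$j)^2)"

text \<open>\<open>FSP_L(\<sigma>_w^2) = E[\<parallel>H\<parallel>_F^2/\<parallel>X\<parallel>_F^2]\<close>, where H has C i.i.d. columns
  \<open>h_c ~ N(0,\<Sigma>^(L))\<close>, c < C.\<close>
definition FSP :: "(real \<Rightarrow> real) \<Rightarrow> nat \<Rightarrow> real^'n^'n \<Rightarrow> real^'d^'n \<Rightarrow> nat \<Rightarrow> real \<Rightarrow> real" where
  "FSP \<sigma> C A X L s =
     (\<integral>H. (\<Sum>c<C. (norm (H c))^2) / frob_sq X \<partial>(PiM {..<C} (\<lambda>_. gauss (Sigma_layer \<sigma> s A X L))))"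

end

theory Submission
  imports Defs
begin


lemma quad_insert:
  fixes S :: "'a \<Rightarrow> 'a \<Rightarrow> real"
  assumes "finite I" "a \<notin> I" "\<And>i j. S i j = S j i"
  shows "(\<Sum>i\<in>insert a I. \<Sum>j\<in>insert a I. x i * S i j * x j)
       = x a * S a a * x a + 2 * x a * (\<Sum>j\<in>I. S a j * x j) + (\<Sum>i\<in>I. \<Sum>j\<in>I. x i * S i j * x j)"
proof -
  have "(\<Sum>i\<in>insert a I. \<Sum>j\<in>insert a I. x i * S i j * x j)
      = (\<Sum>j\<in>insert a I. x a * S a j * x j) + (\<Sum>i\<in>I. \<Sum>j\<in>insert a I. x i * S i j * x j)"
    using assms by (simp add: sum.insert)
  also have "(\<Sum>j\<in>insert a I. x a * S a j * x j) = x a * S a a * x a + (\<Sum>j\<in>I. x a * S a j * x j)"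
    using assms by (simp add: sum.insert)
  also have "(\<Sum>i\<in>I. \<Sum>j\<in>insert a I. x i * S i j * x j)
     = (\<Sum>i\<in>I. x i * S i a * x a) + (\<Sum>i\<in>I. \<Sum>j\<in>I. x i * S i j * x j)"
    using assms by (simp add: sum.insert sum.distrib)
  also have "(\<Sum>i\<in>I. x i * S i a * x a) = (\<Sum>j\<in>I. x a * S a j * x j)"
    using assms(3) by (intro sum.cong) (auto simp: algebra_simps)
  also have "(\<Sum>j\<in>I. x a * S a j * x j) = x a * (\<Sum>j\<in>I. S a j * x j)"
    by (simp add: sum_distrib_left algebra_simps)
  finally show ?thesis by simp
qed

lemma chol_gen:
  fixes S :: "'a \<Rightarrow> 'a \<Rightarrow> real"
  assumes "finite I" "\<And>i j. S i j = S j i" "\<And>x. 0 \<le> (\<Sum>i\<in>I. \<Sum>j\<in>I. x i * S i j * x j)"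
  shows "\<exists>B. \<forall>i\<in>I. \<forall>j\<in>I. S i j = (\<Sum>k\<in>I. B i k * B j k)"
  using assms
proof (induction I arbitrary: S rule: finite_induct)
  case empty
  then show ?case by simp
next
  case (insert a I)
  note fin = insert.hyps(1) and aI = insert.hyps(2)
  note sym = insert.prems(1) and psd = insert.prems(2)
  note Q = quad_insert[OF fin aI, of S, OF sym]
  have Saa: "0 \<le> S a a"
  proof -
    have "0 \<le> (\<Sum>i\<in>insert a I. \<Sum>j\<in>insert a I. (\<lambda>i. if i = a then 1 else 0) i * S i j * (\<lambda>i. if i = a then 1 else 0) j)"
      by (rule psd)
    also have "\<dots> = S a a"
    proof -
      have z1: "(\<Sum>j\<in>I. S a j * (if j = a then 1 else 0)) = 0"
        using aI by (intro sum.neutral) auto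
      have z2: "(\<Sum>i\<in>I. \<Sum>j\<in>I. (if i = a then 1 else 0) * S i j * (if j = a then 1 else (0::real))) = 0"
        using aI by (intro sum.neutral) auto
      show ?thesis by (subst Q) (simp add: z1 z2)
    qed
    finally show ?thesis .
  qed
  show ?case
  proof (cases "S a a = 0")
    case True
    have Saj: "S a j = 0" if j: "j \<in> I" for j
    proof (rule ccontr)
      assume ne: "S a j \<noteq> 0"
      define t where "t = - (S j j + 1) / (2 * S a j)"
      define x where "x = (\<lambda>i. if i = a then t else if i = j then 1 else (0::real))"
      have ja: "j \<noteq> a" using j aI by auto
      have x_I: "\<And>i. i \<in> I \<Longrightarrow> x i = (if i = j then 1 else 0)" using aI by (auto simp: x_def)
      have "(\<Sum>k\<in>I. S a k * x k) = (\<Sum>k\<in>I. if k = j then S a k else 0)"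
        by (rule sum.cong) (auto simp: x_I)
      also have "\<dots> = S a j" using j fin by simp
      finally have e1: "(\<Sum>k\<in>I. S a k * x k) = S a j" .
      have "(\<Sum>i\<in>I. \<Sum>k\<in>I. x i * S i k * x k) = (\<Sum>i\<in>I. if i = j then S j j else 0)"
      proof (rule sum.cong)
        fix i assume i: "i \<in> I"
        have "(\<Sum>k\<in>I. x i * S i k * x k) = (\<Sum>k\<in>I. if k = j then x i * S i j else 0)"
          by (rule sum.cong) (auto simp: x_I)
        also have "\<dots> = x i * S i j" using j fin by simp
        finally show "(\<Sum>k\<in>I. x i * S i k * x k) = (if i = j then S j j else 0)"
          using i by (simp add: x_I)
      qed simp
      also have "\<dots> = S j j" using j fin by simp
      finally have e2: "(\<Sum>i\<in>I. \<Sum>k\<in>I. x i * S i k * x k) = S j j" .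
      note e1 e2
      moreover have "x a = t" by (simp add: x_def)
      ultimately have "(\<Sum>i\<in>insert a I. \<Sum>k\<in>insert a I. x i * S i k * x k) = 2 * t * S a j + S j j"
        using True by (subst Q) simp
      also have "\<dots> = -1" using ne by (simp add: t_def field_simps)
      finally show False using psd[of x] by simp
    qed
    obtain B where B: "\<forall>i\<in>I. \<forall>j\<in>I. S i j = (\<Sum>k\<in>I. B i k * B j k)"
    proof -
      have "\<exists>B. \<forall>i\<in>I. \<forall>j\<in>I. S i j = (\<Sum>k\<in>I. B i k * B j k)"
      proof (rule insert.IH)
        show "S i j = S j i" for i j by (rule sym)
        fix x :: "'a \<Rightarrow> real"
        have "0 \<le> (\<Sum>i\<in>insert a I. \<Sum>j\<in>insert a I. (x(a := 0)) i * S i j * (x(a:=0)) j)"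
          by (rule psd)
        also have "\<dots> = (\<Sum>i\<in>I. \<Sum>j\<in>I. x i * S i j * x j)"
          using aI by (subst Q) (auto intro!: sum.cong)
        finally show "0 \<le> (\<Sum>i\<in>I. \<Sum>j\<in>I. x i * S i j * x j)" .
      qed
      then show ?thesis using that by blast
    qed
    define B' where "B' = (\<lambda>i k. if i = a \<or> k = a then 0 else B i k)"
    have "S i j = (\<Sum>k\<in>insert a I. B' i k * B' j k)" if ij: "i \<in> insert a I" "j \<in> insert a I" for i j
    proof -
      have "(\<Sum>k\<in>insert a I. B' i k * B' j k) = (\<Sum>k\<in>I. B' i k * B' j k)"
        using fin aI by (simp add: B'_def)
      show ?thesis
      proof (cases "i = a \<or> j = a")
        case True
        then have "S i j = 0" using ij Saj sym \<open>S a a = 0\<close> by (metis insert_iff)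
        moreover have "(\<Sum>k\<in>insert a I. B' i k * B' j k) = 0"
          using True by (auto simp: B'_def intro!: sum.neutral)
        ultimately show ?thesis by simp
      next
        case False
        then have "i \<in> I" "j \<in> I" using ij by auto
        then have "S i j = (\<Sum>k\<in>I. B i k * B j k)" using B by auto
        also have "\<dots> = (\<Sum>k\<in>I. B' i k * B' j k)"
          using False aI by (auto simp: B'_def intro!: sum.cong)
        also have "\<dots> = (\<Sum>k\<in>insert a I. B' i k * B' j k)"
          using fin aI by (simp add: B'_def)
        finally show ?thesis .
      qed
    qed
    then show ?thesis by blast
  next
    case False
    with Saa have pos: "S a a > 0" by simp
    define S' where "S' = (\<lambda>i j. S i j - S i a * S a j / S a a)"
    obtain B where B: "\<forall>i\<in>I. \<forall>j\<in>I. S' i j = (\<Sum>k\<in>I. B i k * B j k)"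
    proof -
      have "\<exists>B. \<forall>i\<in>I. \<forall>j\<in>I. S' i j = (\<Sum>k\<in>I. B i k * B j k)"
      proof (rule insert.IH)
        show "S' i j = S' j i" for i j unfolding S'_def using sym[of i j] sym[of i a] sym[of a j]
          by (simp add: algebra_simps)
        fix x :: "'a \<Rightarrow> real"
        define c where "c = (\<Sum>j\<in>I. S a j * x j)"
        define y where "y = x(a := - c / S a a)"
        have yI: "\<And>i. i \<in> I \<Longrightarrow> y i = x i" using aI by (auto simp: y_def)
        have "0 \<le> (\<Sum>i\<in>insert a I. \<Sum>j\<in>insert a I. y i * S i j * y j)"
          by (rule psd)
        also have "\<dots> = (- c / S a a) * S a a * (- c / S a a) + 2 * (- c / S a a) * c
             + (\<Sum>i\<in>I. \<Sum>j\<in>I. x i * S i j * x j)"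
        proof -
          have ya: "y a = - c / S a a" by (simp add: y_def)
          have s1: "(\<Sum>j\<in>I. S a j * y j) = c" unfolding c_def by (rule sum.cong) (auto simp: yI)
          have s2: "(\<Sum>i\<in>I. \<Sum>j\<in>I. y i * S i j * y j) = (\<Sum>i\<in>I. \<Sum>j\<in>I. x i * S i j * x j)"
            by (intro sum.cong) (auto simp: yI)
          show ?thesis by (subst Q) (simp only: ya s1 s2)
        qed
        also have "\<dots> = (\<Sum>i\<in>I. \<Sum>j\<in>I. x i * S i j * x j) - c * c / S a a"
          using pos by (simp add: field_simps power2_eq_square)
        also have "c * c / S a a = (\<Sum>i\<in>I. \<Sum>j\<in>I. x i * (S i a * S a j / S a a) * x j)"
        proof -
          have "(\<Sum>i\<in>I. \<Sum>j\<in>I. x i * (S i a * S a j / S a a) * x j)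
              = (\<Sum>i\<in>I. x i * S i a) * (\<Sum>j\<in>I. S a j * x j) / S a a"
            by (subst sum_product) (simp add: sum_divide_distrib algebra_simps)
          also have "(\<Sum>i\<in>I. x i * S i a) = c"
            unfolding c_def using sym by (intro sum.cong) (auto simp: algebra_simps)
          finally show ?thesis by (simp add: c_def)
        qed
        also have "(\<Sum>i\<in>I. \<Sum>j\<in>I. x i * S i j * x j) - (\<Sum>i\<in>I. \<Sum>j\<in>I. x i * (S i a * S a j / S a a) * x j)
            = (\<Sum>i\<in>I. \<Sum>j\<in>I. x i * S' i j * x j)"
          by (simp add: S'_def sum_subtractf[symmetric] algebra_simps)
        finally show "0 \<le> (\<Sum>i\<in>I. \<Sum>j\<in>I. x i * S' i j * x j)" .
      qed
      then show ?thesis using that by blast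
    qed
    define r where "r = sqrt (S a a)"
    have r: "r > 0" "r * r = S a a" using pos by (auto simp: r_def)
    define B' where "B' = (\<lambda>i k. if k = a then S i a / r else if i = a then 0 else B i k)"
    have "S i j = (\<Sum>k\<in>insert a I. B' i k * B' j k)" if ij: "i \<in> insert a I" "j \<in> insert a I" for i j
    proof -
      have e1: "(\<Sum>k\<in>insert a I. B' i k * B' j k) = S i a * S j a / S a a + (\<Sum>k\<in>I. B' i k * B' j k)"
        using fin aI r by (simp add: B'_def)
      show ?thesis
      proof (cases "i = a \<or> j = a")
        case True
        moreover have "(\<Sum>k\<in>I. B' i k * B' j k) = 0"
          using True aI by (auto simp: B'_def intro!: sum.neutral)
        ultimately show ?thesis using e1 pos sym[of i j] sym[of a j] sym[of i a] by auto
      next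
        case False
        then have "i \<in> I" "j \<in> I" using ij by auto
        then have "S' i j = (\<Sum>k\<in>I. B i k * B j k)" using B by auto
        also have "\<dots> = (\<Sum>k\<in>I. B' i k * B' j k)"
          using False aI by (auto simp: B'_def intro!: sum.cong)
        finally show ?thesis using e1 sym[of a j] by (simp add: S'_def)
      qed
    qed
    then show ?thesis by blast
  qed
qed

lemma psd_sqrt_exists:
  fixes S :: "real^'n^'n"
  assumes "transpose S = S" "\<And>x. 0 \<le> x \<bullet> (S *v x)"
  shows "\<exists>B::real^'n^'n. B ** transpose B = S"
proof -
  have sym: "S$i$j = S$j$i" for i j using assms(1) by (metis transpose_def vec_lambda_beta)
  have psd: "0 \<le> (\<Sum>i\<in>UNIV. \<Sum>j\<in>UNIV. x i * S$i$j * x j)" for x :: "'n \<Rightarrow> real"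
  proof -
    have "0 \<le> (\<chi> i. x i) \<bullet> (S *v (\<chi> i. x i))" by (rule assms(2))
    also have "\<dots> = (\<Sum>i\<in>UNIV. \<Sum>j\<in>UNIV. x i * S$i$j * x j)"
      by (simp add: inner_vec_def matrix_vector_mult_def sum_distrib_left algebra_simps)
    finally show ?thesis .
  qed
  have "\<exists>B. \<forall>i\<in>UNIV. \<forall>j\<in>UNIV. S$i$j = (\<Sum>k\<in>UNIV. B i k * B j (k::'n))"
    using chol_gen[of UNIV "\<lambda>i j. S$i$j", OF _ sym psd] by simp
  then obtain B :: "'n \<Rightarrow> 'n \<Rightarrow> real" where B: "\<And>i j. S$i$j = (\<Sum>k\<in>UNIV. B i k * B j k)" by blast
  have "(\<chi> i k. B i k) ** transpose (\<chi> i k. B i k) = S"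
    by (simp add: vec_eq_iff matrix_matrix_mult_def transpose_def B)
  then show ?thesis by blast
qed


lemma tanh_le_self: "tanh (x::real) \<le> x" if "0 \<le> x"
proof -
  have "(\<lambda>x. x - tanh x) 0 \<le> (\<lambda>x. x - tanh x) x"
  proof (rule DERIV_nonneg_imp_nondecreasing[OF that])
    fix y :: real
    show "\<exists>d. ((\<lambda>x. x - tanh x) has_real_derivative d) (at y) \<and> 0 \<le> d"
      by (rule exI[of _ "1 - (1 - tanh y ^ 2)"]) (auto intro!: derivative_eq_intros)
  qed
  then show ?thesis by simp
qed

lemma cosh_le_exp_half_sq: "cosh (x::real) \<le> exp (x^2/2)"
proof -
  have main: "cosh y \<le> exp (y^2/2)" if "0 \<le> y" for y :: real
  proof -
    have "(\<lambda>x. x^2/2 - ln (cosh x)) 0 \<le> (\<lambda>x. x^2/2 - ln (cosh x)) y"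
    proof (rule DERIV_nonneg_imp_nondecreasing[OF that])
      fix z :: real assume z0: "0 \<le> z" and z1: "z \<le> y"
      have z: "0 \<le> z \<and> z \<le> y" using z0 z1 by simp
      have "cosh z > 0" by simp
      have "((\<lambda>x. x^2/2 - ln (cosh x)) has_real_derivative (z - sinh z / cosh z)) (at z)"
        using \<open>cosh z > 0\<close> by (auto intro!: derivative_eq_intros simp: field_simps power2_eq_square)
      moreover have "0 \<le> z - sinh z / cosh z"
        using tanh_le_self[of z] z by (simp add: tanh_def)
      ultimately show "\<exists>d. ((\<lambda>x. x^2/2 - ln (cosh x)) has_real_derivative d) (at z) \<and> 0 \<le> d"
        by blast
    qed
    then have "ln (cosh y) \<le> y^2/2" by simp
    then show ?thesis
      by (metis cosh_real_pos exp_le_cancel_iff exp_ln)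
  qed
  show ?thesis
  proof (cases "0 \<le> x")
    case True then show ?thesis by (rule main)
  next
    case False
    then have "cosh (-x) \<le> exp ((-x)^2/2)" by (intro main) auto
    then show ?thesis by simp
  qed
qed

lemma tanh_sq_le: "(tanh (x::real))^2 \<le> 1 - exp (-(x^2))"
proof -
  have c: "cosh x > 0" by simp
  have "(cosh x)^2 \<le> (exp (x^2/2))^2"
    using cosh_le_exp_half_sq[of x] c by (intro power_mono) auto
  also have "(exp (x^2/2))^2 = exp (x^2)"
    by (simp add: exp_double[symmetric])
  finally have h: "(cosh x)^2 \<le> exp (x^2)" .
  have "(tanh x)^2 = 1 - 1 / (cosh x)^2"
  proof -
    have "(tanh x)^2 = (sinh x)^2 / (cosh x)^2" by (simp add: tanh_def power_divide)
    also have "(sinh x)^2 = (cosh x)^2 - 1" by (simp add: cosh_square_eq)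
    finally show ?thesis using c by (simp add: diff_divide_distrib)
  qed
  moreover have "1 / (cosh x)^2 \<ge> exp (-(x^2))"
    using h c by (simp add: exp_minus field_simps)
  ultimately show ?thesis by simp
qed

definition psi :: "real \<Rightarrow> real" where "psi u = u - 1 + exp (-u)"

lemma psi_nonneg: "0 \<le> psi u"
  using exp_ge_add_one_self[of "-u"] by (simp add: psi_def)

lemma psi_pos: "0 < u \<Longrightarrow> 0 < psi u"
proof -
  assume u: "0 < u"
  have "1 - u < exp (-u)" using u exp_minus_greater[of u] by auto
  then show ?thesis by (simp add: psi_def)
qed

lemma psi_mono: "0 \<le> u \<Longrightarrow> u \<le> v \<Longrightarrow> psi u \<le> psi v"
proof -
  assume u: "0 \<le> u" "u \<le> v"
  have "1 - (v-u) \<le> exp (-(v-u))" by (rule exp_minus_ge)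
  then have "exp (-u) * (1 - (v-u)) \<le> exp (-u) * exp (-(v-u))"
    by (intro mult_left_mono) auto
  also have "exp (-u) * exp (-(v-u)) = exp (-v)" by (simp add: exp_add[symmetric])
  finally have "exp (-u) - exp(-v) \<le> exp (-u) * (v-u)" by (simp add: algebra_simps)
  also have "\<dots> \<le> 1 * (v - u)" using u by (intro mult_right_mono) auto
  finally show ?thesis by (simp add: psi_def)
qed

lemma psi_convex: "convex_on UNIV psi"
  unfolding psi_def
  by (rule f''_ge0_imp_convex[where f'="\<lambda>u. 1 - exp (-u)" and f''="\<lambda>u. exp (-u)"])
     (auto intro!: derivative_eq_intros)


abbreviation Nm :: "real measure" where "Nm \<equiv> density lborel std_normal_density"

definition Tm :: "(real^'n \<Rightarrow> real) \<Rightarrow> real^'n" where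
  "Tm f = (\<Sum>b\<in>Basis. f b *\<^sub>R b)"

lemma Basis_vec_real: "(Basis :: (real^'n) set) = range (\<lambda>i. axis i 1)"
  by (auto simp: Basis_vec_def)

lemma Tm_nth: "Tm f $ i = f (axis i 1)"
proof -
  have "Tm f $ i = Tm f \<bullet> axis i 1" by (simp add: inner_axis)
  also have "\<dots> = (\<Sum>b\<in>Basis. f b * (b \<bullet> axis i 1))"
    by (simp add: Tm_def inner_sum_left)
  also have "\<dots> = (\<Sum>b\<in>Basis. if b = axis i 1 then f b else 0)"
    by (rule sum.cong) (auto simp: inner_Basis)
  also have "\<dots> = f (axis i 1)" by simp
  finally show ?thesis .
qed

lemma Tm_measurable[measurable]: "Tm \<in> measurable (PiM Basis (\<lambda>_. lborel)) borel"
  unfolding Tm_def by measurable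

lemma Tm_measurable_Nm[measurable]: "Tm \<in> measurable (PiM Basis (\<lambda>_. Nm)) borel"
proof -
  have "measurable (PiM Basis (\<lambda>_. Nm)) borel = measurable (PiM (Basis::(real^'n) set) (\<lambda>_. lborel)) borel"
    by (intro measurable_cong_sets sets_PiM_cong) auto
  then show ?thesis using Tm_measurable by simp
qed

lemma sigma_finite_Nm: "sigma_finite_measure Nm"
  by (rule prob_space_imp_sigma_finite) (rule prob_space_normal_density, simp)

lemma prod_Basis_reindex: "(\<Prod>i\<in>UNIV. g (axis i (1::real))) = (\<Prod>b\<in>(Basis::(real^'n) set). g b)"
proof -
  have "inj (\<lambda>i::'n. axis i (1::real))" by (auto simp: inj_on_def axis_eq_axis)
  then show ?thesis by (simp add: Basis_vec_real prod.reindex)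
qed

lemma std_gauss_eq: "(std_gauss :: (real^'n) measure) = distr (PiM Basis (\<lambda>_. Nm)) borel Tm"
proof -
  interpret L: product_sigma_finite "\<lambda>_::real^'n. lborel"
    by standard
  interpret N: product_sigma_finite "\<lambda>_::real^'n. Nm"
    unfolding product_sigma_finite_def using sigma_finite_Nm by simp
  let ?g = "\<lambda>x::real^'n. ennreal (\<Prod>i\<in>UNIV. std_normal_density (x$i))"
  have g_meas[measurable]: "?g \<in> borel_measurable borel" by measurable
  have lb: "(lborel :: (real^'n) measure) = distr (PiM Basis (\<lambda>_. lborel)) borel Tm"
    unfolding Tm_def by (rule lborel_eq)
  have "std_gauss = density (distr (PiM Basis (\<lambda>_. lborel)) borel Tm) ?g"
    by (subst lb[symmetric]) simp
  also have "\<dots> = distr (density (PiM Basis (\<lambda>_. lborel)) (\<lambda>f. ?g (Tm f))) borel Tm"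
    by (rule density_distr) measurable
  also have "density (PiM Basis (\<lambda>_. lborel)) (\<lambda>f. ?g (Tm f)) = PiM Basis (\<lambda>_. Nm)"
  proof (rule N.PiM_eqI)
    show "finite (Basis :: (real^'n) set)" by simp
    show "sets (density (PiM Basis (\<lambda>_. lborel)) (\<lambda>f. ?g (Tm f))) = sets (PiM (Basis :: (real^'n) set) (\<lambda>_. Nm))"
      by (simp only: sets_density) (rule sets_PiM_cong; simp)
  next
    fix A :: "real^'n \<Rightarrow> real set"
    assume A: "\<And>i. i \<in> Basis \<Longrightarrow> A i \<in> sets Nm"
    have A': "A b \<in> sets borel" if "b \<in> Basis" for b using A[OF that] by simp
    have "emeasure (density (PiM Basis (\<lambda>_. lborel)) (\<lambda>f. ?g (Tm f))) (Pi\<^sub>E Basis A)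
        = (\<integral>\<^sup>+f. ?g (Tm f) * indicator (Pi\<^sub>E Basis A) f \<partial>PiM Basis (\<lambda>_. lborel))"
      using A' by (subst emeasure_density) (auto intro!: sets_PiM_I_finite)
    also have "\<dots> = (\<integral>\<^sup>+f. (\<Prod>b\<in>Basis. ennreal (std_normal_density (f b)) * indicator (A b) (f b)) \<partial>PiM Basis (\<lambda>_. lborel))"
    proof (rule nn_integral_cong)
      fix f :: "real^'n \<Rightarrow> real" assume f: "f \<in> space (PiM Basis (\<lambda>_::real^'n. lborel))"
      have "?g (Tm f) = (\<Prod>b\<in>Basis. ennreal (std_normal_density (f b)))"
        by (simp add: Tm_nth prod_Basis_reindex[where g="\<lambda>b. std_normal_density (f b)"] prod_ennreal)
      moreover have "indicator (Pi\<^sub>E Basis A) f = (\<Prod>b\<in>Basis. indicator (A b) (f b) :: ennreal)"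
        using f by (auto simp: indicator_def space_PiM PiE_def Pi_def prod_ennreal)
      ultimately show "?g (Tm f) * indicator (Pi\<^sub>E Basis A) f = (\<Prod>b\<in>Basis. ennreal (std_normal_density (f b)) * indicator (A b) (f b))"
        by (simp add: prod.distrib)
    qed
    also have "\<dots> = (\<Prod>b\<in>Basis. \<integral>\<^sup>+x. ennreal (std_normal_density x) * indicator (A b) x \<partial>lborel)"
      using A' by (intro L.product_nn_integral_prod) auto
    also have "\<dots> = (\<Prod>b\<in>Basis. emeasure Nm (A b))"
      using A' by (intro prod.cong refl) (simp add: emeasure_density)
    finally show "emeasure (density (PiM Basis (\<lambda>_. lborel)) (\<lambda>f. ?g (Tm f))) (Pi\<^sub>E Basis A) = (\<Prod>b\<in>Basis. emeasure Nm (A b))" .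
  qed
  finally show ?thesis .
qed


abbreviation PB :: "(real^'n \<Rightarrow> real) measure" where "PB \<equiv> PiM Basis (\<lambda>_. Nm)"

lemma prob_space_Nm: "prob_space Nm"
  by (rule prob_space_normal_density) simp

lemma prob_space_PB: "prob_space PB"
  by (rule prob_space_PiM) (rule prob_space_Nm)

definition Bs :: "real^'n^'n \<Rightarrow> real^'n^'n" where
  "Bs S = (SOME B. B ** transpose B = S)"

lemma mvmult_measurable[measurable]: "(\<lambda>z::real^'n. B *v z) \<in> borel_measurable borel"
  by (intro borel_measurable_continuous_onI continuous_intros)

lemma BT_measurable[measurable]: "(\<lambda>f. B *v Tm f) \<in> borel_measurable PB"
  using measurable_comp[OF Tm_measurable_Nm mvmult_measurable[of B]] by (simp add: comp_def)

lemma gauss_eq: "gauss S = distr PB borel (\<lambda>f. Bs S *v Tm f)"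
  unfolding gauss_def Bs_def std_gauss_eq
  by (subst distr_distr) (auto simp: comp_def)

lemma prob_space_gauss: "prob_space (gauss S)"
  unfolding gauss_eq by (intro prob_space.prob_space_distr prob_space_PB) simp

lemma integrable_Nm_pow: "integrable Nm (\<lambda>x. x^k)"
  by (subst integrable_density) (auto simp: integrable_std_normal_moment)

lemma integral_Nm_pow: "integral\<^sup>L Nm (\<lambda>x. x^k) = integral\<^sup>L lborel (\<lambda>x. std_normal_density x * x^k)"
  by (subst integral_density) auto

lemma Nm_mom0: "integral\<^sup>L Nm (\<lambda>x. x^0) = 1"
  using prob_space.prob_space[OF prob_space_Nm] by simp

lemma Nm_mom1: "integral\<^sup>L Nm (\<lambda>x. x) = 0"
  using integral_std_normal_moment_odd[of 0] integral_Nm_pow[of 1] by simp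

lemma Nm_mom2: "integral\<^sup>L Nm (\<lambda>x. x * x) = 1"
  using integral_std_normal_moment_even[of 1] integral_Nm_pow[of 2] by (simp add: power2_eq_square)

lemma Nm_UNIV: "measure Nm UNIV = 1"
  using prob_space.prob_space[OF prob_space_Nm] by simp

lemma mom_PB:
  fixes b c :: "real^'n"
  assumes bc: "b \<in> Basis" "c \<in> Basis"
  shows "integrable PB (\<lambda>f. f b * f c)"
    and "(\<integral>f. f b * f c \<partial>PB) = (if b = c then 1 else 0)"
proof -
  interpret N: product_sigma_finite "\<lambda>_::real^'n. Nm"
    unfolding product_sigma_finite_def using sigma_finite_Nm by simp
  define k where "k a = (if a = b then 1 else 0) + (if a = c then 1 else (0::nat))" for a
  have pw: "(\<Prod>a\<in>Basis. f a ^ k a) = f b * f c" for f :: "real^'n \<Rightarrow> real"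
  proof -
    have "(\<Prod>a\<in>Basis. f a ^ k a) = (\<Prod>a\<in>Basis. (if a = b then f a else 1) * (if a = c then f a else 1))"
      by (intro prod.cong) (auto simp: k_def power_add)
    also have "\<dots> = f b * f c" using bc by (simp add: prod.distrib)
    finally show ?thesis .
  qed
  have int: "integrable PB (\<lambda>f. \<Prod>a\<in>Basis. f a ^ k a)"
    by (intro N.product_integrable_prod) (auto simp: integrable_Nm_pow)
  then show "integrable PB (\<lambda>f. f b * f c)" by (simp add: pw)
  have "(\<integral>f. (\<Prod>a\<in>Basis. f a ^ k a) \<partial>PB) = (\<Prod>a\<in>Basis. integral\<^sup>L Nm (\<lambda>x. x ^ k a))"
    by (intro N.product_integral_prod) (auto simp: integrable_Nm_pow)
  also have "\<dots> = (if b = c then 1 else 0)"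
  proof (cases "b = c")
    case True
    then have "(\<Prod>a\<in>Basis. integral\<^sup>L Nm (\<lambda>x. x ^ k a)) = (\<Prod>a\<in>(Basis::(real^'n) set). 1)"
      by (intro prod.cong) (auto simp: k_def Nm_UNIV Nm_mom2)
    then show ?thesis using True by simp
  next
    case False
    have "integral\<^sup>L Nm (\<lambda>x. x ^ k b) = 0" using False by (simp add: k_def Nm_mom1)
    then have "(\<Prod>a\<in>Basis. integral\<^sup>L Nm (\<lambda>x. x ^ k a)) = 0"
      using bc by (intro prod_zero) auto
    then show ?thesis using False by simp
  qed
  finally show "(\<integral>f. f b * f c \<partial>PB) = (if b = c then 1 else 0)" by (simp add: pw)
qed

lemma BT_nth: "(B *v Tm f) $ i = (\<Sum>j\<in>UNIV. B$i$j * f (axis j 1))"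
  by (simp add: matrix_vector_mult_def Tm_nth)

lemma gauss_sq:
  fixes S :: "real^'n^'n"
  shows "integrable (gauss S) (\<lambda>h. (h$i)^2)"
    and "(\<integral>h. (h$i)^2 \<partial>gauss S) = (\<Sum>j\<in>UNIV. (Bs S $i$j)^2)"
proof -
  let ?B = "Bs S"
  have sq: "((?B *v Tm f) $ i)^2 = (\<Sum>j\<in>UNIV. \<Sum>k\<in>UNIV. ?B$i$j * ?B$i$k * (f (axis j 1) * f (axis k 1)))" for f
    by (simp add: BT_nth power2_eq_square sum_product algebra_simps)
  have intjk: "integrable PB (\<lambda>f. f (axis j 1) * f (axis k 1))" for j k :: 'n
    by (rule mom_PB(1)) auto
  have int: "integrable PB (\<lambda>f. ((?B *v Tm f) $ i)^2)"
    unfolding sq by (auto intro!: integrable_sum integrable_mult_right intjk)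
  then show "integrable (gauss S) (\<lambda>h. (h$i)^2)"
    unfolding gauss_eq by (subst integrable_distr_eq) auto
  have "(\<integral>h. (h$i)^2 \<partial>gauss S) = (\<integral>f. ((?B *v Tm f) $ i)^2 \<partial>PB)"
    unfolding gauss_eq by (subst integral_distr) auto
  also have "\<dots> = (\<Sum>j\<in>UNIV. \<Sum>k\<in>UNIV. ?B$i$j * ?B$i$k * (\<integral>f. f (axis j 1) * f (axis k 1) \<partial>PB))"
    unfolding sq by (simp add: integral_sum integrable_sum integrable_mult_right intjk)
  also have "\<dots> = (\<Sum>j\<in>UNIV. \<Sum>k\<in>UNIV. if j = k then ?B$i$j * ?B$i$k else 0)"
    by (intro sum.cong refl) (simp add: mom_PB(2) axis_eq_axis)
  also have "\<dots> = (\<Sum>j\<in>UNIV. (?B$i$j)^2)" by (simp add: power2_eq_square)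
  finally show "(\<integral>h. (h$i)^2 \<partial>gauss S) = (\<Sum>j\<in>UNIV. (?B$i$j)^2)" .
qed


definition dg :: "real^'n^'n \<Rightarrow> 'n \<Rightarrow> real" where
  "dg A i = (\<Sum>j\<in>UNIV. A$i$j) + 1"

lemma A_tilde_entry: "A_tilde A $ i $ j = A$i$j + (if i = j then 1 else 0)"
  by (simp add: A_tilde_def mat_def)

lemma D_tilde_diag: "D_tilde A $ i $ i = dg A i"
  by (simp add: D_tilde_def degree_mat_def diag_mat_def mat_def dg_def matrix_vector_mult_def)

lemma dg_sum: "dg A i = (\<Sum>j\<in>UNIV. A_tilde A $ i $ j)"
  by (simp add: dg_def A_tilde_entry sum.distrib)

lemma diag_mult_left: "(diag_mat v ** M) $ i $ j = v$i * M$i$j"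
proof -
  have "(diag_mat v ** M) $ i $ j = (\<Sum>k\<in>UNIV. (if i = k then v$i else 0) * M$k$j)"
    by (simp add: matrix_matrix_mult_def diag_mat_def)
  also have "\<dots> = (\<Sum>k\<in>UNIV. if k = i then v$i * M$k$j else 0)"
    by (rule sum.cong) auto
  finally show ?thesis by simp
qed

lemma diag_mult_right: "(M ** diag_mat v) $ i $ j = M$i$j * v$j"
proof -
  have "(M ** diag_mat v) $ i $ j = (\<Sum>k\<in>UNIV. M $ i $ k * (if k = j then v $ k else 0))"
    by (simp add: matrix_matrix_mult_def diag_mat_def)
  also have "\<dots> = (\<Sum>k\<in>UNIV. if k = j then M$i$k * v$j else 0)"
    by (rule sum.cong) auto
  finally show ?thesis by simp
qed

lemma A_hat_entry: "A_hat A $ i $ j = A_tilde A $ i $ j / (sqrt (dg A i) * sqrt (dg A j))"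
  unfolding A_hat_def D_tilde_inv_sqrt_def
  by (simp add: diag_mult_left diag_mult_right D_tilde_diag)

context
  fixes A :: "real^'n^'n"
  assumes adj: "adjacency_matrix A"
begin

lemma adj_nonneg: "0 \<le> A$i$j"
  using adj unfolding adjacency_matrix_def by (metis order.refl zero_le_one)

lemma adj_sym: "A$i$j = A$j$i"
  using adj unfolding adjacency_matrix_def by auto

lemma At_nonneg: "0 \<le> A_tilde A $ i $ j"
  by (simp add: A_tilde_entry adj_nonneg)

lemma At_sym: "A_tilde A $ i $ j = A_tilde A $ j $ i"
  by (simp add: A_tilde_entry adj_sym)

lemma dg_ge1: "1 \<le> dg A i"
  unfolding dg_def using adj_nonneg by (simp add: sum_nonneg)

lemma A_hat_sym: "A_hat A $ i $ j = A_hat A $ j $ i"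
  by (simp add: A_hat_entry At_sym mult.commute)

lemma A_hat_transpose: "transpose (A_hat A) = A_hat A"
  by (simp add: transpose_def vec_eq_iff A_hat_sym)

lemma A_hat_contr: "(\<Sum>i\<in>UNIV. (\<Sum>j\<in>UNIV. A_hat A $ i $ j * y j)^2) \<le> (\<Sum>j\<in>UNIV. (y j)^2)"
proof -
  define w where "w i j = A_tilde A $ i $ j" for i j
  define r where "r i = 1 / sqrt (dg A i)" for i
  have w0: "0 \<le> w i j" for i j by (simp add: w_def At_nonneg)
  have dpos: "0 < dg A i" for i using dg_ge1[of i] by simp
  have r2: "(r i)^2 * dg A i = 1" for i using dpos[of i] by (simp add: r_def power_divide)
  have Ahat: "A_hat A $ i $ j = w i j * r i * r j" for i j
    by (simp add: A_hat_entry w_def r_def)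
  have row: "(\<Sum>j\<in>UNIV. A_hat A $ i $ j * y j)^2 \<le> (\<Sum>j\<in>UNIV. w i j * (r j)^2 * (y j)^2)" for i
  proof -
    have "(\<Sum>j\<in>UNIV. A_hat A $ i $ j * y j) = (\<Sum>j\<in>UNIV. sqrt (w i j) * (sqrt (w i j) * r i * r j * y j))"
    proof (intro sum.cong refl)
      fix j
      have "sqrt (w i j) * sqrt (w i j) = w i j" using w0[of i j] by simp
      then show "A_hat A $ i $ j * y j = sqrt (w i j) * (sqrt (w i j) * r i * r j * y j)"
        by (simp add: Ahat mult.assoc[symmetric])
    qed
    then have "(\<Sum>j\<in>UNIV. A_hat A $ i $ j * y j)^2 \<le> (\<Sum>j\<in>UNIV. (sqrt (w i j))^2) * (\<Sum>j\<in>UNIV. (sqrt (w i j) * r i * r j * y j)^2)"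
      using Cauchy_Schwarz_ineq_sum by metis
    also have "(\<Sum>j\<in>UNIV. (sqrt (w i j))^2) = dg A i"
      by (simp add: At_nonneg dg_sum w_def)
    also have "(\<Sum>j\<in>UNIV. (sqrt (w i j) * r i * r j * y j)^2) = (r i)^2 * (\<Sum>j\<in>UNIV. w i j * (r j)^2 * (y j)^2)"
      by (simp add: power_mult_distrib w0 sum_distrib_left algebra_simps)
    also have "dg A i * ((r i)^2 * (\<Sum>j\<in>UNIV. w i j * (r j)^2 * (y j)^2)) = (\<Sum>j\<in>UNIV. w i j * (r j)^2 * (y j)^2)"
      using r2[of i] by (simp add: algebra_simps)
    finally show ?thesis .
  qed
  have "(\<Sum>i\<in>UNIV. (\<Sum>j\<in>UNIV. A_hat A $ i $ j * y j)^2) \<le> (\<Sum>i\<in>UNIV. \<Sum>j\<in>UNIV. w i j * (r j)^2 * (y j)^2)"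
    by (intro sum_mono row)
  also have "\<dots> = (\<Sum>j\<in>UNIV. (\<Sum>i\<in>UNIV. w i j) * (r j)^2 * (y j)^2)"
    by (subst sum.swap) (simp add: sum_distrib_right)
  also have "\<dots> = (\<Sum>j\<in>UNIV. (y j)^2)"
  proof (intro sum.cong refl)
    fix j
    have "(\<Sum>i\<in>UNIV. w i j) = dg A j" by (simp add: dg_sum w_def At_sym)
    then show "(\<Sum>i\<in>UNIV. w i j) * (r j)^2 * (y j)^2 = (y j)^2"
      using r2[of j] by (simp add: algebra_simps)
  qed
  finally show ?thesis .
qed

end


lemma sets_gauss[measurable_cong, simp]: "sets (gauss S) = sets borel"
  by (simp add: gauss_def)

lemma space_gauss[simp]: "space (gauss S) = UNIV"
  by (simp add: gauss_def)

lemma tanh_comp_measurable[measurable]: "(\<lambda>h::real^'n. tanh (h$i)) \<in> borel_measurable borel"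
  by (intro borel_measurable_continuous_onI continuous_intros) auto

lemma abs_tanh_le1: "\<bar>tanh (x::real)\<bar> \<le> 1"
  using tanh_real_lt_1[of x] tanh_real_gt_neg1[of x] by linarith

lemma int_tt: "integrable (gauss S) (\<lambda>h. tanh (h$i) * tanh (h$j))"
proof -
  interpret prob_space "gauss S" by (rule prob_space_gauss)
  show ?thesis
  proof (rule integrable_const_bound[where B=1])
    show "AE x in gauss S. norm (tanh (x$i) * tanh (x$j)) \<le> 1"
      using abs_tanh_le1 by (auto simp: abs_mult intro!: mult_le_one)
  qed measurable
qed

lemma quad_int:
  fixes u :: "'n::finite \<Rightarrow> 'a \<Rightarrow> real"
  assumes int: "\<And>i j. integrable M (\<lambda>h. u i h * u j h)"
  shows "(\<Sum>i\<in>UNIV. \<Sum>j\<in>UNIV. x i * (\<integral>h. u i h * u j h \<partial>M) * x j)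
       = (\<integral>h. (\<Sum>i\<in>UNIV. x i * u i h)^2 \<partial>M)"
proof -
  have sq: "(\<Sum>i\<in>UNIV. x i * u i h)^2 = (\<Sum>i\<in>UNIV. \<Sum>j\<in>UNIV. (x i * x j) * (u i h * u j h))" for h
    by (simp add: power2_eq_square sum_product algebra_simps)
  have "(\<integral>h. (\<Sum>i\<in>UNIV. x i * u i h)^2 \<partial>M) = (\<Sum>i\<in>UNIV. \<Sum>j\<in>UNIV. (x i * x j) * (\<integral>h. u i h * u j h \<partial>M))"
    unfolding sq by (simp add: integral_sum integrable_sum int)
  then show ?thesis by (simp add: algebra_simps)
qed

lemma psd_Gmap: "psd (Gmap tanh S)"
  unfolding psd_def
proof
  show "transpose (Gmap tanh S) = Gmap tanh S"
    by (simp add: transpose_def Gmap_def vec_eq_iff mult.commute)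
  show "\<forall>x. 0 \<le> x \<bullet> (Gmap tanh S *v x)"
  proof
    fix x :: "real^'a"
    have "x \<bullet> (Gmap tanh S *v x) = (\<Sum>i\<in>UNIV. \<Sum>j\<in>UNIV. x$i * (\<integral>h. tanh (h$i) * tanh (h$j) \<partial>gauss S) * x$j)"
      by (simp add: inner_vec_def matrix_vector_mult_def Gmap_def sum_distrib_left algebra_simps)
    also have "\<dots> = (\<integral>h. (\<Sum>i\<in>UNIV. x$i * tanh (h$i))^2 \<partial>gauss S)"
      by (rule quad_int[where u="\<lambda>i h. tanh (h$i)"]) (rule int_tt)
    also have "\<dots> \<ge> 0" by (simp add: integral_nonneg_AE)
    finally show "0 \<le> x \<bullet> (Gmap tanh S *v x)" .
  qed
qed

lemma psd_sandwich:
  assumes P: "transpose P = P" and M: "psd M"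
  shows "psd (P ** M ** P)"
  unfolding psd_def
proof
  show "transpose (P ** M ** P) = P ** M ** P"
    using P M by (simp add: psd_def matrix_transpose_mul matrix_mul_assoc)
  show "\<forall>x. 0 \<le> x \<bullet> ((P ** M ** P) *v x)"
  proof
    fix x
    have "x \<bullet> ((P ** M ** P) *v x) = x \<bullet> (P *v (M *v (P *v x)))"
      by (simp only: matrix_vector_mul_assoc matrix_mul_assoc)
    also have "\<dots> = (x v* P) \<bullet> (M *v (P *v x))" by (simp add: dot_lmul_matrix)
    also have "x v* P = P *v x" using P by (metis transpose_matrix_vector)
    finally show "0 \<le> x \<bullet> ((P ** M ** P) *v x)" using M by (simp add: psd_def)
  qed
qed

lemma psd_scale:
  assumes "psd M" "0 \<le> c"
  shows "psd (c *\<^sub>R M)"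
  unfolding psd_def
proof
  show "transpose (c *\<^sub>R M) = c *\<^sub>R M"
    using assms(1) by (simp add: psd_def transpose_def vec_eq_iff)
  show "\<forall>x. 0 \<le> x \<bullet> ((c *\<^sub>R M) *v x)"
  proof
    fix x
    have "x \<bullet> ((c *\<^sub>R M) *v x) = c * (x \<bullet> (M *v x))"
      by (simp add: inner_vec_def matrix_vector_mult_def sum_distrib_left algebra_simps)
    then show "0 \<le> x \<bullet> ((c *\<^sub>R M) *v x)" using assms by (simp add: psd_def)
  qed
qed

lemma transpose_rect_eq: "transpose_rect X = transpose X"
  by (simp add: transpose_rect_def transpose_def)

lemma psd_XXt: "psd (X ** transpose_rect X)"
  unfolding psd_def transpose_rect_eq
proof
  show "transpose (X ** transpose X) = X ** transpose X"
    by (simp add: matrix_transpose_mul)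
  show "\<forall>x. 0 \<le> x \<bullet> ((X ** transpose X) *v x)"
  proof
    fix x
    have "x \<bullet> ((X ** transpose X) *v x) = (x v* X) \<bullet> (transpose X *v x)"
      by (simp add: matrix_vector_mul_assoc[symmetric] dot_lmul_matrix)
    also have "\<dots> = (transpose X *v x) \<bullet> (transpose X *v x)" by simp
    finally show "0 \<le> x \<bullet> ((X ** transpose X) *v x)" by simp
  qed
qed

lemma psd_diag: "psd S \<Longrightarrow> 0 \<le> S$i$i"
proof -
  assume "psd S"
  then have "0 \<le> axis i 1 \<bullet> (S *v axis i 1)" by (simp add: psd_def)
  then show ?thesis by (simp add: inner_axis' matrix_vector_mult_basis column_def)
qed

lemma Bs_sq: "psd S \<Longrightarrow> Bs S ** transpose (Bs S) = S"
  unfolding Bs_def psd_def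
  by (rule someI_ex, rule psd_sqrt_exists) auto

lemma gauss_var: "psd S \<Longrightarrow> (\<integral>h. (h$i)^2 \<partial>gauss S) = S$i$i"
proof -
  assume S: "psd S"
  have "(\<integral>h. (h$i)^2 \<partial>gauss S) = (\<Sum>j\<in>UNIV. (Bs S $i$j)^2)" by (rule gauss_sq(2))
  also have "\<dots> = (Bs S ** transpose (Bs S)) $ i $ i"
    by (simp add: matrix_matrix_mult_def transpose_def power2_eq_square)
  also have "\<dots> = S$i$i" using Bs_sq[OF S] by simp
  finally show ?thesis .
qed

lemma G_diag_bound:
  assumes S: "psd S"
  shows "Gmap tanh S $ i $ i \<le> S$i$i - psi (S$i$i)"
proof -
  interpret P: prob_space "gauss S" by (rule prob_space_gauss)
  have intsq: "integrable (gauss S) (\<lambda>h. (h$i)^2)" by (rule gauss_sq(1))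
  have intexp: "integrable (gauss S) (\<lambda>h. exp (- ((h$i)^2)))"
    by (rule P.integrable_const_bound[where B=1]) auto
  have intpsi: "integrable (gauss S) (\<lambda>h. psi ((h$i)^2))"
    unfolding psi_def using intsq intexp by (auto intro!: integrable_add integrable_diff)
  have "Gmap tanh S $ i $ i = (\<integral>h. (tanh (h$i))^2 \<partial>gauss S)"
    by (simp add: Gmap_def power2_eq_square)
  also have "\<dots> \<le> (\<integral>h. (h$i)^2 - psi ((h$i)^2) \<partial>gauss S)"
  proof (rule integral_mono)
    show "integrable (gauss S) (\<lambda>h. (tanh (h$i))^2)"
      using int_tt[of S i i] by (simp add: power2_eq_square)
    show "integrable (gauss S) (\<lambda>h. (h$i)^2 - psi ((h$i)^2))"
      using intsq intpsi by auto
    fix h :: "real^'a"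
    show "(tanh (h$i))^2 \<le> (h$i)^2 - psi ((h$i)^2)"
      using tanh_sq_le[of "h$i"] by (simp add: psi_def)
  qed
  also have "\<dots> = S$i$i - (\<integral>h. psi ((h$i)^2) \<partial>gauss S)"
    using intsq intpsi gauss_var[OF S, of i] by simp
  finally have G1: "Gmap tanh S $ i $ i \<le> S$i$i - (\<integral>h. psi ((h$i)^2) \<partial>gauss S)" .
  have "psi (S$i$i) \<le> (\<integral>h. psi ((h$i)^2) \<partial>gauss S)"
  proof -
    have "psi (P.expectation (\<lambda>h. (h$i)^2)) \<le> P.expectation (\<lambda>h. psi ((h$i)^2))"
      by (rule P.jensens_inequality[where I=UNIV]) (auto simp: intsq intpsi psi_convex)
    then show ?thesis using gauss_var[OF S, of i] by simp
  qed
  with G1 show ?thesis by simp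
qed


definition tr :: "real^'n^'n \<Rightarrow> real" where "tr M = (\<Sum>i\<in>UNIV. M$i$i)"

lemma tr_scale: "tr (c *\<^sub>R M) = c * tr M"
  by (simp add: tr_def sum_distrib_left)

lemma tr_nonneg: "psd S \<Longrightarrow> 0 \<le> tr S"
  unfolding tr_def by (intro sum_nonneg psd_diag)

lemma int_quad:
  fixes u :: "'n::finite \<Rightarrow> 'a \<Rightarrow> real"
  assumes int: "\<And>i j. integrable M (\<lambda>h. u i h * u j h)"
  shows "integrable M (\<lambda>h. (\<Sum>i\<in>UNIV. x i * u i h)^2)"
proof -
  have sq: "(\<Sum>i\<in>UNIV. x i * u i h)^2 = (\<Sum>i\<in>UNIV. \<Sum>j\<in>UNIV. (x i * x j) * (u i h * u j h))" for h
    by (simp add: power2_eq_square sum_product algebra_simps)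
  show ?thesis unfolding sq by (auto intro!: integrable_sum integrable_mult_right int)
qed

lemma sandwich_entry:
  assumes P: "\<And>i j. P$i$j = P$j$i"
  shows "(P ** G ** P) $ i $ i = (\<Sum>j\<in>UNIV. \<Sum>k\<in>UNIV. P$i$j * G$j$k * P$i$k)"
proof -
  have "(P ** G ** P) $ i $ i = (\<Sum>k\<in>UNIV. \<Sum>j\<in>UNIV. P$i$j * G$j$k * P$k$i)"
    by (simp add: matrix_matrix_mult_def sum_distrib_right)
  also have "\<dots> = (\<Sum>k\<in>UNIV. \<Sum>j\<in>UNIV. P$i$j * G$j$k * P$i$k)"
    using P by (intro sum.cong refl) metis
  also have "\<dots> = (\<Sum>j\<in>UNIV. \<Sum>k\<in>UNIV. P$i$j * G$j$k * P$i$k)"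
    by (rule sum.swap)
  finally show ?thesis .
qed

lemma tr_sandwich_G:
  assumes adj: "adjacency_matrix A"
  shows "tr (A_hat A ** Gmap tanh S ** A_hat A) \<le> (\<Sum>j\<in>UNIV. Gmap tanh S $ j $ j)"
proof -
  interpret P: prob_space "gauss S" by (rule prob_space_gauss)
  let ?P = "A_hat A"
  let ?t = "\<lambda>j h. tanh (h$j)"
  have ent: "(?P ** Gmap tanh S ** ?P) $ i $ i = (\<integral>h. (\<Sum>j\<in>UNIV. ?P$i$j * ?t j h)^2 \<partial>gauss S)" for i
  proof -
    have "(?P ** Gmap tanh S ** ?P) $ i $ i = (\<Sum>j\<in>UNIV. \<Sum>k\<in>UNIV. ?P$i$j * (\<integral>h. ?t j h * ?t k h \<partial>gauss S) * ?P$i$k)"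
      by (subst sandwich_entry) (auto simp: A_hat_sym[OF adj] Gmap_def)
    also have "\<dots> = (\<integral>h. (\<Sum>j\<in>UNIV. ?P$i$j * ?t j h)^2 \<partial>gauss S)"
      by (rule quad_int) (rule int_tt)
    finally show ?thesis .
  qed
  have intq: "integrable (gauss S) (\<lambda>h. (\<Sum>j\<in>UNIV. ?P$i$j * ?t j h)^2)" for i
    by (rule int_quad) (rule int_tt)
  have "tr (?P ** Gmap tanh S ** ?P) = (\<integral>h. (\<Sum>i\<in>UNIV. (\<Sum>j\<in>UNIV. ?P$i$j * ?t j h)^2) \<partial>gauss S)"
    unfolding tr_def ent by (rule Bochner_Integration.integral_sum[symmetric]) (rule intq)
  also have "\<dots> \<le> (\<integral>h. (\<Sum>j\<in>UNIV. (?t j h)^2) \<partial>gauss S)"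
  proof (rule integral_mono)
    show "integrable (gauss S) (\<lambda>h. \<Sum>i\<in>UNIV. (\<Sum>j\<in>UNIV. ?P$i$j * ?t j h)^2)"
      by (auto intro!: integrable_sum intq)
    show "integrable (gauss S) (\<lambda>h. \<Sum>j\<in>UNIV. (?t j h)^2)"
      unfolding power2_eq_square by (rule Bochner_Integration.integrable_sum, rule int_tt)
    fix h :: "real^'a"
    show "(\<Sum>i\<in>UNIV. (\<Sum>j\<in>UNIV. ?P$i$j * ?t j h)^2) \<le> (\<Sum>j\<in>UNIV. (?t j h)^2)"
      by (rule A_hat_contr[OF adj])
  qed
  also have "\<dots> = (\<Sum>j\<in>UNIV. Gmap tanh S $ j $ j)"
    unfolding power2_eq_square
    by (subst Bochner_Integration.integral_sum) (auto simp: Gmap_def int_tt)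
  finally show ?thesis .
qed

lemma frob_sq_nonneg: "0 \<le> frob_sq M"
  unfolding frob_sq_def by (intro sum_nonneg) auto

lemma tr_Sigma0:
  assumes adj: "adjacency_matrix A"
  shows "tr (A_hat A ** (X ** transpose_rect X) ** A_hat A) \<le> frob_sq X"
proof -
  let ?P = "A_hat A"
  define N where "N = ?P ** X"
  have "?P ** (X ** transpose_rect X) ** ?P = N ** transpose N"
    unfolding N_def transpose_rect_eq
    by (simp add: matrix_transpose_mul A_hat_transpose[OF adj] matrix_mul_assoc)
  then have "tr (?P ** (X ** transpose_rect X) ** ?P) = frob_sq N"
    by (simp add: tr_def frob_sq_def matrix_matrix_mult_def transpose_def power2_eq_square)
  also have "frob_sq N = (\<Sum>m\<in>UNIV. \<Sum>i\<in>UNIV. (\<Sum>j\<in>UNIV. ?P$i$j * X$j$m)^2)"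
    unfolding frob_sq_def N_def by (subst sum.swap) (simp add: matrix_matrix_mult_def)
  also have "\<dots> \<le> (\<Sum>m\<in>UNIV. \<Sum>j\<in>UNIV. (X$j$m)^2)"
    by (intro sum_mono A_hat_contr[OF adj])
  also have "\<dots> = frob_sq X"
    unfolding frob_sq_def by (rule sum.swap)
  finally show ?thesis .
qed

context
  fixes A :: "real^'n::finite^'n" and X :: "real^'d::finite^'n" and s :: real
  assumes adj: "adjacency_matrix A" and s0: "0 \<le> s"
begin

lemma psd_Sigma: "psd (Sigma_seq tanh s A X l)"
proof (induction l)
  case 0
  show ?case
    by (simp, intro psd_scale psd_sandwich A_hat_transpose[OF adj] psd_XXt) (simp add: s0)
next
  case (Suc l)
  show ?case
    by (simp, intro psd_scale psd_sandwich A_hat_transpose[OF adj] psd_Gmap s0)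
qed

lemma tr_Sigma_0: "tr (Sigma_seq tanh s A X 0) \<le> s / real CARD('d) * frob_sq X"
  by (simp add: tr_scale) (intro divide_right_mono mult_left_mono tr_Sigma0[OF adj] s0, simp)

lemma tr_Sigma_step:
  "tr (Sigma_seq tanh s A X (Suc l)) \<le>
     s * (tr (Sigma_seq tanh s A X l) - (\<Sum>j\<in>UNIV. psi (Sigma_seq tanh s A X l $ j $ j)))"
proof -
  let ?S = "Sigma_seq tanh s A X l"
  have "tr (Sigma_seq tanh s A X (Suc l)) = s * tr (A_hat A ** Gmap tanh ?S ** A_hat A)"
    by (simp add: tr_scale)
  also have "\<dots> \<le> s * (\<Sum>j\<in>UNIV. Gmap tanh ?S $ j $ j)"
    by (intro mult_left_mono tr_sandwich_G[OF adj] s0)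
  also have "\<dots> \<le> s * (\<Sum>j\<in>UNIV. ?S$j$j - psi (?S$j$j))"
    by (intro mult_left_mono sum_mono G_diag_bound psd_Sigma s0)
  also have "\<dots> = s * (tr ?S - (\<Sum>j\<in>UNIV. psi (?S $ j $ j)))"
    by (simp add: tr_def sum_subtractf)
  finally show ?thesis .
qed

end


lemma norm_sq_vec: "(norm (h::real^'n))^2 = (\<Sum>i\<in>UNIV. (h$i)^2)"
  unfolding power2_norm_eq_inner by (simp add: inner_vec_def power2_eq_square)

lemma gauss_norm_sq:
  assumes S: "psd S"
  shows "integrable (gauss S) (\<lambda>h. (norm h)^2)" "(\<integral>h. (norm h)^2 \<partial>gauss S) = tr S"
proof -
  show "integrable (gauss S) (\<lambda>h. (norm h)^2)"
    unfolding norm_sq_vec by (rule Bochner_Integration.integrable_sum, rule gauss_sq(1))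
  show "(\<integral>h. (norm h)^2 \<partial>gauss S) = tr S"
    unfolding norm_sq_vec tr_def
    by (subst Bochner_Integration.integral_sum) (auto intro: gauss_sq(1) simp: gauss_var[OF S])
qed

lemma FSP_eq:
  assumes S: "psd (Sigma_layer tanh s A X L)"
  shows "FSP tanh C A X L s = real C * tr (Sigma_layer tanh s A X L) / frob_sq X"
proof -
  let ?S = "Sigma_layer tanh s A X L"
  let ?Q = "PiM {..<C} (\<lambda>_. gauss ?S)"
  have comp: "distr ?Q (gauss ?S) (\<lambda>\<omega>. \<omega> c) = gauss ?S" if "c < C" for c
    by (rule distr_PiM_component) (auto intro: prob_space_gauss that)
  have meas: "(\<lambda>\<omega>. \<omega> c) \<in> measurable ?Q (gauss ?S)" if "c < C" for c
    using that by (intro measurable_component_singleton) auto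
  have intc: "integrable ?Q (\<lambda>H. (norm (H c))^2)" if "c < C" for c
  proof -
    have "integrable (distr ?Q (gauss ?S) (\<lambda>\<omega>. \<omega> c)) (\<lambda>h. (norm h)^2)"
      unfolding comp[OF that] by (rule gauss_norm_sq(1)[OF S])
    then show ?thesis
      by (subst (asm) integrable_distr_eq[OF meas[OF that]]) auto
  qed
  have intv: "(\<integral>H. (norm (H c))^2 \<partial>?Q) = tr ?S" if "c < C" for c
  proof -
    have "(\<integral>H. (norm (H c))^2 \<partial>?Q) = (\<integral>h. (norm h)^2 \<partial>distr ?Q (gauss ?S) (\<lambda>\<omega>. \<omega> c))"
      by (subst integral_distr[OF meas[OF that]]) auto
    also have "\<dots> = tr ?S" unfolding comp[OF that] by (rule gauss_norm_sq(2)[OF S])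
    finally show ?thesis .
  qed
  have "FSP tanh C A X L s = (\<integral>H. (\<Sum>c<C. (norm (H c))^2) \<partial>?Q) / frob_sq X"
    unfolding FSP_def by simp
  also have "(\<integral>H. (\<Sum>c<C. (norm (H c))^2) \<partial>?Q) = (\<Sum>c<C. \<integral>H. (norm (H c))^2 \<partial>?Q)"
    by (rule Bochner_Integration.integral_sum) (auto intro: intc)
  also have "\<dots> = (\<Sum>c<C. tr ?S)" by (intro sum.cong refl) (auto intro: intv)
  finally show ?thesis by simp
qed

lemma frob_sq_pos: "X \<noteq> 0 \<Longrightarrow> 0 < frob_sq X"
proof -
  assume X: "X \<noteq> 0"
  then obtain i j where ij: "X$i$j \<noteq> 0" by (metis vec_eq_iff zero_index)
  have "0 < (X$i$j)^2" using ij by simp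
  also have "(X$i$j)^2 \<le> (\<Sum>j\<in>UNIV. (X$i$j)^2)"
    by (rule member_le_sum) auto
  also have "\<dots> \<le> frob_sq X" unfolding frob_sq_def
    by (rule member_le_sum[of i UNIV "\<lambda>i. \<Sum>j\<in>UNIV. (X$i$j)^2"]) (auto intro: sum_nonneg)
  finally show ?thesis .
qed


theorem mainTheorem6:
  fixes A :: "real^'n::finite^'n" and X :: "real^'d::finite^'n" and C :: nat
  assumes "adjacency_matrix A"
    and "X \<noteq> 0"
    and "C \<ge> 1"
  shows "((\<lambda>L. FSP tanh C A X L 1) \<longlonglongrightarrow> 0)
     \<and> (\<forall>s::real. 0 < s \<and> s < 1 \<longrightarrow>
          (\<forall>L\<ge>1. FSP tanh C A X L s \<le> real C / real CARD('d) * s ^ L))"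
proof
  note adj = assms(1)
  have F: "0 < frob_sq X" using frob_sq_pos[OF assms(2)] .
  have FSP: "FSP tanh C A X L s = real C * tr (Sigma_seq tanh s A X (L - 1)) / frob_sq X"
    if "0 \<le> s" for s L
  proof -
    have "psd (Sigma_layer tanh s A X L)" unfolding Sigma_layer_def by (rule psd_Sigma[OF adj that])
    from FSP_eq[OF this, of C] show ?thesis by (simp add: Sigma_layer_def)
  qed
  define t where "t l = tr (Sigma_seq tanh 1 A X l)" for l
  define n where "n = real CARD('n)"
  have n: "0 < n" by (simp add: n_def)
  have t0: "0 \<le> t l" for l unfolding t_def by (intro tr_nonneg psd_Sigma adj) simp
  have tstep: "t (Suc l) \<le> t l - psi (t l / n)" for l
  proof -
    let ?S = "Sigma_seq tanh 1 A X l"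
    have psdS: "psd ?S" by (intro psd_Sigma adj) simp
    have "\<exists>j. t l / n \<le> ?S$j$j"
    proof (rule ccontr)
      assume "\<not> (\<exists>j. t l / n \<le> ?S$j$j)"
      then have lt: "?S$j$j < t l / n" for j by (simp add: not_le)
      have "t l = (\<Sum>j\<in>UNIV. ?S$j$j)" by (simp add: t_def tr_def)
      also have "\<dots> < (\<Sum>j\<in>(UNIV::'n set). t l / n)" by (intro sum_strict_mono lt) auto
      also have "\<dots> = t l" using n by (simp add: n_def)
      finally show False by simp
    qed
    then obtain j where j: "t l / n \<le> ?S$j$j" by blast
    have "psi (t l / n) \<le> psi (?S$j$j)"
      using j t0[of l] n by (intro psi_mono) auto
    also have "\<dots> \<le> (\<Sum>j\<in>UNIV. psi (?S$j$j))"
      by (rule member_le_sum) (auto intro: psi_nonneg)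
    finally have "psi (t l / n) \<le> (\<Sum>j\<in>UNIV. psi (?S$j$j))" .
    moreover have "t (Suc l) \<le> 1 * (t l - (\<Sum>j\<in>UNIV. psi (?S$j$j)))"
      unfolding t_def by (rule tr_Sigma_step[OF adj]) simp
    ultimately show ?thesis by simp
  qed
  have tdec: "t m \<le> t l" if "l \<le> m" for l m
    using that
  proof (induction m)
    case 0 then show ?case by simp
  next
    case (Suc m)
    show ?case
    proof (cases "l = Suc m")
      case True then show ?thesis by simp
    next
      case False
      then have "t m \<le> t l" using Suc by simp
      moreover have "t (Suc m) \<le> t m" using tstep[of m] psi_nonneg[of "t m / n"] by simp
      ultimately show ?thesis by simp
    qed
  qed
  have tlim: "t \<longlonglongrightarrow> 0"
  proof (rule LIMSEQ_I)
    fix r :: real assume r: "0 < r"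
    define d where "d = psi (r / n)"
    have d: "0 < d" unfolding d_def using r n by (intro psi_pos) simp
    have "\<exists>l. t l < r"
    proof (rule ccontr)
      assume "\<not> (\<exists>l. t l < r)"
      then have ge: "r \<le> t l" for l by (simp add: not_less)
      have bound: "t l \<le> t 0 - real l * d" for l
      proof (induction l)
        case 0 then show ?case by simp
      next
        case (Suc l)
        have "d \<le> psi (t l / n)" unfolding d_def using ge[of l] r n
          by (intro psi_mono) (auto simp: divide_right_mono)
        then show ?case using tstep[of l] Suc by (simp add: algebra_simps)
      qed
      obtain l :: nat where l: "t 0 / d < real l" using reals_Archimedean2 by blast
      then have "t 0 < real l * d" using d by (simp add: field_simps)
      then show False using bound[of l] t0[of l] by simp
    qed
    then obtain l where l: "t l < r" by blast
    show "\<exists>no. \<forall>m\<ge>no. norm (t m - 0) < r"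
      using l tdec t0 by (intro exI[of _ l]) (auto intro: le_less_trans)
  qed
  have "(\<lambda>L. t (L - 1)) \<longlonglongrightarrow> 0"
    by (rule LIMSEQ_imp_Suc) (simp add: tlim)
  then have "(\<lambda>L. real C * t (L - 1) / frob_sq X) \<longlonglongrightarrow> real C * 0 / frob_sq X"
    using F by (intro tendsto_intros) auto
  then show "(\<lambda>L. FSP tanh C A X L 1) \<longlonglongrightarrow> 0"
    by (simp add: FSP t_def)
next
  note adj = assms(1)
  have F: "0 < frob_sq X" using frob_sq_pos[OF assms(2)] .
  show "\<forall>s::real. 0 < s \<and> s < 1 \<longrightarrow> (\<forall>L\<ge>1. FSP tanh C A X L s \<le> real C / real CARD('d) * s ^ L)"
  proof (intro allI impI)
    fix s :: real and L :: nat
    assume s: "0 < s \<and> s < 1" and L: "1 \<le> L"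
    then have s0: "0 \<le> s" by simp
    have tb: "tr (Sigma_seq tanh s A X l) \<le> s ^ (Suc l) / real CARD('d) * frob_sq X" for l
    proof (induction l)
      case 0 then show ?case using tr_Sigma_0[OF adj s0] by simp
    next
      case (Suc l)
      let ?S = "Sigma_seq tanh s A X l"
      have "tr (Sigma_seq tanh s A X (Suc l)) \<le> s * (tr ?S - (\<Sum>j\<in>UNIV. psi (?S $ j $ j)))"
        by (rule tr_Sigma_step[OF adj s0])
      also have "\<dots> \<le> s * tr ?S"
        using s0 by (intro mult_left_mono) (auto intro!: sum_nonneg psi_nonneg)
      also have "\<dots> \<le> s * (s ^ (Suc l) / real CARD('d) * frob_sq X)"
        using s0 Suc by (intro mult_left_mono) auto
      finally show ?case by simp
    qed
    have "FSP tanh C A X L s = real C * tr (Sigma_seq tanh s A X (L - 1)) / frob_sq X"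
    proof -
      have "psd (Sigma_layer tanh s A X L)" unfolding Sigma_layer_def by (rule psd_Sigma[OF adj s0])
      from FSP_eq[OF this, of C] show ?thesis by (simp add: Sigma_layer_def)
    qed
    also have "\<dots> \<le> real C * (s ^ L / real CARD('d) * frob_sq X) / frob_sq X"
      using tb[of "L - 1"] L F by (intro divide_right_mono mult_left_mono) auto
    also have "\<dots> = real C / real CARD('d) * s ^ L" using F by simp
    finally show "FSP tanh C A X L s \<le> real C / real CARD('d) * s ^ L" .
  qed
qed


end
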